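(* Let $\mathcal{X},\mathcal{Y}$ be separable Hilbert spaces and $K:\mathcal{X}\to\mathcal{Y}$ a compact linear operator with Moore–Penrose generalised inverse $K^+$ (domain $\mathcal{D}(K^+)$). Let $Y_1,Y_2,\dots$ be independent, identically distributed $\mathcal{Y}$-valued random variables with $\mathbb{E}[Y_1]=\hat y\in\mathcal{D}(K^+)$ and $0<\mathbb{E}\|Y_1\|^2<\infty$. Let $(R_\alpha)_{\alpha>0}$ be a regularisation together with an a priori parameter choice $\delta\mapsto\alpha(\delta)>0$ such that $\alpha(\delta)\to0$ and $\|R_{\alpha(\delta)}\|\,\delta\to0$ as $\delta\to0$. Set $\bar Y_n:=\frac1n\sum_{i\le n}Y_i$ and $\delta_n^{est}:=n^{-1/2}$. Then $$\lim_{n\to\infty}\mathbb{E}\,\big\|R_{\alpha(\delta_n^{est})}\bar Y_n-K^+\hat y\big\|^2=0.$$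
   Context: A regularisation is a family $(R_\alpha)_{\alpha>0}$ of bounded linear operators $R_\alpha:\mathcal{Y}\to\mathcal{X}$ such that $R_\alpha y\to K^+y$ as $\alpha\to0$ for every $y\in\mathcal{D}(K^+)$. An a priori parameter choice is a map $\alpha:(0,\infty)\to(0,\infty)$ depending only on the noise level $\delta$ (not on the data). *)

theory Defs
  imports "HOL-Probability.Probability"
begin

definition orth_compl :: "'a::real_inner set \<Rightarrow> 'a set" where
  "orth_compl S = {x. \<forall>s\<in>S. inner x s = 0}"

definition compact_op :: "('a::real_normed_vector \<Rightarrow>\<^sub>L 'b::real_normed_vector) \<Rightarrow> bool" where
  "compact_op K \<longleftrightarrow> compact (closure (blinfun_apply K ` cball 0 1))"

text \<open>Domain of the Moore--Penrose inverse: D(K^+) = R(K) + R(K)^perp.\<close>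
definition mp_dom :: "('a::real_inner \<Rightarrow>\<^sub>L 'b::real_inner) \<Rightarrow> 'b set" where
  "mp_dom K = {y. \<exists>x. y - blinfun_apply K x \<in> orth_compl (range (blinfun_apply K))}"

text \<open>Moore--Penrose inverse on its domain: K^+ y is the unique x in N(K)^perp with
  y - K x in R(K)^perp (i.e. K x = Q y, Q the projection onto the closure of R(K)).\<close>
definition mp_inv :: "('a::real_inner \<Rightarrow>\<^sub>L 'b::real_inner) \<Rightarrow> 'b \<Rightarrow> 'a" where
  "mp_inv K y = (THE x. x \<in> orth_compl {z. blinfun_apply K z = 0}
                   \<and> y - blinfun_apply K x \<in> orth_compl (range (blinfun_apply K)))"

definition is_regularisation ::
  "('a::real_inner \<Rightarrow>\<^sub>L 'b::real_inner) \<Rightarrow> (real \<Rightarrow> ('b \<Rightarrow>\<^sub>L 'a)) \<Rightarrow> bool" where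
  "is_regularisation K R \<longleftrightarrow>
     (\<forall>y\<in>mp_dom K. ((\<lambda>\<alpha>. blinfun_apply (R \<alpha>) y) \<longlongrightarrow> mp_inv K y) (at_right 0))"

end

theory Submission imports Defs "HOL-Real_Asymp.Real_Asymp" begin

lemma ab_le: "0 \<le> a \<Longrightarrow> 0 \<le> b \<Longrightarrow> (a::real)*b \<le> a\<^sup>2+b\<^sup>2"
  using power2_diff[of a b] zero_le_power2[of "a-b"] mult_nonneg_nonneg[of a b] by linarith

lemma (in prob_space) indep_pair:
  assumes ind: "indep_vars (\<lambda>_. borel) Y UNIV" and ij: "i \<noteq> j"
  shows "indep_var borel (Y i) borel (Y j)"
proof -
  have "indep_var
    borel ((\<lambda>f. f i) \<circ> (\<lambda>\<omega>. restrict (\<lambda>i. Y i \<omega>) {i}))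
    borel ((\<lambda>f. f j) \<circ> (\<lambda>\<omega>. restrict (\<lambda>i. Y i \<omega>) {j}))"
    using ij by (intro indep_var_compose[OF indep_var_restrict[OF ind]]) auto
  also have "((\<lambda>f. f i) \<circ> (\<lambda>\<omega>. restrict (\<lambda>i. Y i \<omega>) {i})) = Y i" by auto
  also have "((\<lambda>f. f j) \<circ> (\<lambda>\<omega>. restrict (\<lambda>i. Y i \<omega>) {j})) = Y j" by auto
  finally show ?thesis .
qed

lemma (in prob_space) cross_zero:
  fixes Y :: "nat \<Rightarrow> 'a \<Rightarrow> 'b::{real_inner, complete_space, second_countable_topology}"
  assumes meas: "\<And>i. Y i \<in> borel_measurable M"
    and ind: "indep_vars (\<lambda>_. borel) Y UNIV"
    and dist: "\<And>i. distr M borel (Y i) = distr M borel (Y 0)"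
    and intY: "integrable M (Y 0)"
    and mean: "(\<integral>\<omega>. Y 0 \<omega> \<partial>M) = c"
    and intsq: "\<And>i. integrable M (\<lambda>\<omega>. (norm (Y i \<omega> - c))\<^sup>2)"
    and ij: "i \<noteq> j"
  shows "integrable M (\<lambda>\<omega>. inner (Y i \<omega> - c) (Y j \<omega> - c))"
    and "(\<integral>\<omega>. inner (Y i \<omega> - c) (Y j \<omega> - c) \<partial>M) = 0"
proof -
  define P where "P = distr M borel (Y 0)"
  interpret P: prob_space P unfolding P_def using meas by (rule prob_space_distr)
  interpret PP: pair_sigma_finite P P ..
  define g where "g = (\<lambda>(x::'b,y::'b). inner (x - c) (y - c))"
  have gm[measurable]: "g \<in> borel_measurable (borel \<Otimes>\<^sub>M borel)"
    unfolding g_def by measurable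
  show int: "integrable M (\<lambda>\<omega>. inner (Y i \<omega> - c) (Y j \<omega> - c))"
  proof (rule Bochner_Integration.integrable_bound[OF Bochner_Integration.integrable_add[OF intsq[of i] intsq[of j]]])
    show "(\<lambda>\<omega>. inner (Y i \<omega> - c) (Y j \<omega> - c)) \<in> borel_measurable M"
      using meas by measurable
    show "AE x in M. norm (inner (Y i x - c) (Y j x - c)) \<le> norm ((norm (Y i x - c))\<^sup>2 + (norm (Y j x - c))\<^sup>2)"
    proof (intro AE_I2)
      fix x
      have "\<bar>inner (Y i x - c) (Y j x - c)\<bar> \<le> norm (Y i x - c) * norm (Y j x - c)"
        by (rule Cauchy_Schwarz_ineq2)
      also have "\<dots> \<le> (norm (Y i x - c))\<^sup>2 + (norm (Y j x - c))\<^sup>2"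
        by (rule ab_le) auto
      finally show "norm (inner (Y i x - c) (Y j x - c)) \<le> norm ((norm (Y i x - c))\<^sup>2 + (norm (Y j x - c))\<^sup>2)"
        by simp
    qed
  qed
  have iv: "indep_var borel (Y i) borel (Y j)" by (rule indep_pair[OF ind ij])
  have pm: "(\<lambda>\<omega>. (Y i \<omega>, Y j \<omega>)) \<in> measurable M (borel \<Otimes>\<^sub>M borel)"
    using meas by measurable
  have Q: "distr M (borel \<Otimes>\<^sub>M borel) (\<lambda>\<omega>. (Y i \<omega>, Y j \<omega>)) = P \<Otimes>\<^sub>M P"
    using iv unfolding indep_var_distribution_eq P_def using dist by metis
  have eq1: "(\<integral>\<omega>. inner (Y i \<omega> - c) (Y j \<omega> - c) \<partial>M) = integral\<^sup>L (P \<Otimes>\<^sub>M P) g"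
    using integral_distr[OF pm gm] unfolding Q g_def by simp
  have intg: "integrable (P \<Otimes>\<^sub>M P) g"
    using int integrable_distr_eq[OF pm gm] unfolding Q g_def by simp
  have mean0: "(\<integral>\<omega>. inner v (Y 0 \<omega> - c) \<partial>M) = 0" for v
  proof -
    have "(\<integral>\<omega>. inner v (Y 0 \<omega> - c) \<partial>M) = (\<integral>\<omega>. inner v (Y 0 \<omega>) - inner v c \<partial>M)"
      by (simp add: inner_diff_right)
    also have "\<dots> = (\<integral>\<omega>. inner v (Y 0 \<omega>) \<partial>M) - (\<integral>\<omega>. inner v c \<partial>M)"
      using intY by (intro Bochner_Integration.integral_diff) auto
    also have "\<dots> = 0" using intY mean by (simp add: prob_space)
    finally show ?thesis .
  qed
  have inner0: "(\<integral>y. g (x, y) \<partial>P) = 0" for x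
  proof -
    have "(\<integral>y. g (x, y) \<partial>P) = (\<integral>y. inner (x - c) (y - c) \<partial>P)" by (simp add: g_def)
    also have "\<dots> = (\<integral>\<omega>. inner (x - c) (Y 0 \<omega> - c) \<partial>M)"
      unfolding P_def by (rule integral_distr) (use meas in auto)
    also have "\<dots> = 0" by (rule mean0)
    finally show ?thesis .
  qed
  show "(\<integral>\<omega>. inner (Y i \<omega> - c) (Y j \<omega> - c) \<partial>M) = 0"
    using eq1 PP.integral_fst'[OF intg] inner0 by simp
qed


lemma (in prob_space) same_dist_integral:
  fixes Y :: "nat \<Rightarrow> 'a \<Rightarrow> 'b::{real_inner, complete_space, second_countable_topology}"
  assumes meas: "\<And>i. Y i \<in> borel_measurable M"
    and dist: "\<And>i. distr M borel (Y i) = distr M borel (Y 0)"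
    and f: "(f :: 'b \<Rightarrow> real) \<in> borel_measurable borel"
  shows "integrable M (\<lambda>\<omega>. f (Y i \<omega>)) \<longleftrightarrow> integrable M (\<lambda>\<omega>. f (Y 0 \<omega>))"
    and "(\<integral>\<omega>. f (Y i \<omega>) \<partial>M) = (\<integral>\<omega>. f (Y 0 \<omega>) \<partial>M)"
proof -
  show "integrable M (\<lambda>\<omega>. f (Y i \<omega>)) \<longleftrightarrow> integrable M (\<lambda>\<omega>. f (Y 0 \<omega>))"
    using integrable_distr_eq[OF meas[of i] f] integrable_distr_eq[OF meas[of 0] f] dist[of i] by simp
  show "(\<integral>\<omega>. f (Y i \<omega>) \<partial>M) = (\<integral>\<omega>. f (Y 0 \<omega>) \<partial>M)"
    using integral_distr[OF meas[of i] f] integral_distr[OF meas[of 0] f] dist[of i] by simp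
qed

lemma (in prob_space) var_sum:
  fixes Y :: "nat \<Rightarrow> 'a \<Rightarrow> 'b::{real_inner, complete_space, second_countable_topology}"
  assumes meas: "\<And>i. Y i \<in> borel_measurable M"
    and ind: "indep_vars (\<lambda>_. borel) Y UNIV"
    and dist: "\<And>i. distr M borel (Y i) = distr M borel (Y 0)"
    and intY: "integrable M (Y 0)"
    and mean: "(\<integral>\<omega>. Y 0 \<omega> \<partial>M) = c"
    and intsq0: "integrable M (\<lambda>\<omega>. (norm (Y 0 \<omega> - c))\<^sup>2)"
  shows "integrable M (\<lambda>\<omega>. (norm (\<Sum>i<n. (Y i \<omega> - c)))\<^sup>2)"
    and "(\<integral>\<omega>. (norm (\<Sum>i<n. (Y i \<omega> - c)))\<^sup>2 \<partial>M) = real n * (\<integral>\<omega>. (norm (Y 0 \<omega> - c))\<^sup>2 \<partial>M)"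
proof -
  have fm: "(\<lambda>x::'b. (norm (x - c))\<^sup>2) \<in> borel_measurable borel" by measurable
  have intsq: "integrable M (\<lambda>\<omega>. (norm (Y i \<omega> - c))\<^sup>2)" for i
    using same_dist_integral(1)[of Y, OF meas dist fm, of i] intsq0 by simp
  have eqsq: "(\<integral>\<omega>. (norm (Y i \<omega> - c))\<^sup>2 \<partial>M) = (\<integral>\<omega>. (norm (Y 0 \<omega> - c))\<^sup>2 \<partial>M)" for i
    using same_dist_integral(2)[of Y, OF meas dist fm, of i] by simp
  have pw: "(norm (\<Sum>i<n. (Y i \<omega> - c)))\<^sup>2 = (\<Sum>i<n. \<Sum>j<n. inner (Y i \<omega> - c) (Y j \<omega> - c))" for \<omega>
    unfolding power2_norm_eq_inner inner_sum_left by (simp only: inner_sum_right)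
  have intij: "integrable M (\<lambda>\<omega>. inner (Y i \<omega> - c) (Y j \<omega> - c))" for i j
  proof (cases "i = j")
    case True
    then show ?thesis using intsq[of i] by (simp add: power2_norm_eq_inner)
  next
    case False
    then show ?thesis using cross_zero(1)[OF meas ind dist intY mean intsq False] by simp
  qed
  have Eij: "(\<integral>\<omega>. inner (Y i \<omega> - c) (Y j \<omega> - c) \<partial>M) =
      (if i = j then (\<integral>\<omega>. (norm (Y 0 \<omega> - c))\<^sup>2 \<partial>M) else 0)" for i j
  proof (cases "i = j")
    case True
    then show ?thesis using eqsq[of i] by (simp add: power2_norm_eq_inner)
  next
    case False
    then show ?thesis using cross_zero(2)[OF meas ind dist intY mean intsq False] by simp
  qed
  show "integrable M (\<lambda>\<omega>. (norm (\<Sum>i<n. (Y i \<omega> - c)))\<^sup>2)"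
    unfolding pw using intij by auto
  have "(\<integral>\<omega>. (norm (\<Sum>i<n. (Y i \<omega> - c)))\<^sup>2 \<partial>M)
      = (\<Sum>i<n. \<Sum>j<n. (\<integral>\<omega>. inner (Y i \<omega> - c) (Y j \<omega> - c) \<partial>M))"
    unfolding pw using intij
    by (subst Bochner_Integration.integral_sum, auto intro!: sum.cong Bochner_Integration.integral_sum)
  also have "\<dots> = (\<Sum>i<n. (\<integral>\<omega>. (norm (Y 0 \<omega> - c))\<^sup>2 \<partial>M))"
    unfolding Eij by (simp add: sum.delta)
  finally show "(\<integral>\<omega>. (norm (\<Sum>i<n. (Y i \<omega> - c)))\<^sup>2 \<partial>M) = real n * (\<integral>\<omega>. (norm (Y 0 \<omega> - c))\<^sup>2 \<partial>M)"
    by simp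
qed


lemma sq_add_le: "(norm (u + v :: 'x::real_normed_vector))\<^sup>2 \<le> 2 * (norm u)\<^sup>2 + 2 * (norm v)\<^sup>2"
proof -
  have "norm (u + v) \<le> norm u + norm v" by (rule norm_triangle_ineq)
  then have "(norm (u + v))\<^sup>2 \<le> (norm u + norm v)\<^sup>2"
    by (simp add: power_mono)
  also have "\<dots> \<le> 2 * (norm u)\<^sup>2 + 2 * (norm v)\<^sup>2"
    using power2_diff[of "norm u" "norm v"] zero_le_power2[of "norm u - norm v"]
    by (simp add: power2_sum)
  finally show ?thesis .
qed

lemma inv_sqrt_at_right: "filterlim (\<lambda>n::nat. 1 / sqrt (real n)) (at_right 0) sequentially"
proof -
  have "((\<lambda>n::nat. 1 / sqrt (real n)) \<longlongrightarrow> 0) sequentially"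
    by real_asymp
  moreover have "eventually (\<lambda>n::nat. 1 / sqrt (real n) \<in> {0<..} \<and> 1 / sqrt (real n) \<noteq> 0) sequentially"
    using eventually_gt_at_top[of 0] by eventually_elim auto
  ultimately show ?thesis unfolding filterlim_at by auto
qed

theorem theorem1:
  fixes M :: "'w measure"
    and K :: "'a::{real_inner, complete_space, second_countable_topology} \<Rightarrow>\<^sub>L
              'b::{real_inner, complete_space, second_countable_topology}"
    and Y :: "nat \<Rightarrow> 'w \<Rightarrow> 'b"
    and yhat :: 'b
    and R :: "real \<Rightarrow> ('b \<Rightarrow>\<^sub>L 'a)"
    and alpha :: "real \<Rightarrow> real"
  assumes "prob_space M"
    and "compact_op K"
    and "\<And>i. Y i \<in> borel_measurable M"
    and "prob_space.indep_vars M (\<lambda>_. borel) Y UNIV"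
    and "\<And>i. distr M borel (Y i) = distr M borel (Y 0)"
    and "integrable M (Y 0)"
    and "(\<integral>\<omega>. Y 0 \<omega> \<partial>M) = yhat"
    and "yhat \<in> mp_dom K"
    and "0 < (\<integral>\<^sup>+\<omega>. ennreal ((norm (Y 0 \<omega>))\<^sup>2) \<partial>M)"
    and "(\<integral>\<^sup>+\<omega>. ennreal ((norm (Y 0 \<omega>))\<^sup>2) \<partial>M) < \<infinity>"
    and "is_regularisation K R"
    and "\<And>\<delta>. \<delta> > 0 \<Longrightarrow> alpha \<delta> > 0"
    and "(alpha \<longlongrightarrow> 0) (at_right 0)"
    and "((\<lambda>\<delta>. norm (R (alpha \<delta>)) * \<delta>) \<longlongrightarrow> 0) (at_right 0)"
  shows "(\<lambda>n. \<integral>\<^sup>+\<omega>. ennreal ((norm (blinfun_apply (R (alpha (1 / sqrt (real n))))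
                ((1 / real n) *\<^sub>R (\<Sum>i<n. Y i \<omega>)) - mp_inv K yhat))\<^sup>2) \<partial>M)
         \<longlonglongrightarrow> 0"
proof -
  note ps = assms(1) and meas[measurable] = assms(3) and ind = assms(4) and dist = assms(5)
    and intY = assms(6) and mean = assms(7) and dom = assms(8) and fin = assms(10)
    and reg = assms(11) and apos = assms(12) and alim = assms(13) and Rlim = assms(14)
  interpret prob_space M by (rule ps)
  define c where "c = mp_inv K yhat"
  define s where "s = (\<integral>\<omega>. (norm (Y 0 \<omega> - yhat))\<^sup>2 \<partial>M)"
  define T where "T n = R (alpha (1 / sqrt (real n)))" for n :: nat
  define b where "b n = norm (blinfun_apply (T n) yhat - c)" for n
  define S where "S n \<omega> = (\<Sum>i<n. (Y i \<omega> - yhat))" for n \<omega>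
  have intY2: "integrable M (\<lambda>\<omega>. (norm (Y 0 \<omega>))\<^sup>2)"
    unfolding integrable_iff_bounded using fin by auto
  have intsq0: "integrable M (\<lambda>\<omega>. (norm (Y 0 \<omega> - yhat))\<^sup>2)"
  proof (rule Bochner_Integration.integrable_bound)
    show "integrable M (\<lambda>\<omega>. 2 * (norm (Y 0 \<omega>))\<^sup>2 + 2 * (norm (-yhat))\<^sup>2)"
      using intY2 by (intro Bochner_Integration.integrable_add) auto
    show "(\<lambda>\<omega>. (norm (Y 0 \<omega> - yhat))\<^sup>2) \<in> borel_measurable M" by measurable
    show "AE x in M. norm ((norm (Y 0 x - yhat))\<^sup>2) \<le> norm (2 * (norm (Y 0 x))\<^sup>2 + 2 * (norm (-yhat))\<^sup>2)"
      using sq_add_le[of "Y 0 _" "-yhat"] by (intro AE_I2) simp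
  qed
  have VS: "integrable M (\<lambda>\<omega>. (norm (S n \<omega>))\<^sup>2)"
      "(\<integral>\<omega>. (norm (S n \<omega>))\<^sup>2 \<partial>M) = real n * s" for n
    unfolding S_def s_def
    using var_sum[OF meas ind dist intY mean intsq0] by auto
  define g where "g n = 2 * s * (norm (T n) * (1 / sqrt (real n)))\<^sup>2 + 2 * (b n)\<^sup>2" for n
  have bound: "(\<integral>\<^sup>+\<omega>. ennreal ((norm (blinfun_apply (R (alpha (1 / sqrt (real n))))
                ((1 / real n) *\<^sub>R (\<Sum>i<n. Y i \<omega>)) - mp_inv K yhat))\<^sup>2) \<partial>M) \<le> ennreal (g n)"
    if n: "n \<ge> 1" for n
  proof -
    define A where "A = 2 * (norm (T n))\<^sup>2 * (1 / real n)\<^sup>2"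
    have pw: "(norm (blinfun_apply (R (alpha (1 / sqrt (real n))))
                ((1 / real n) *\<^sub>R (\<Sum>i<n. Y i \<omega>)) - mp_inv K yhat))\<^sup>2
             \<le> A * (norm (S n \<omega>))\<^sup>2 + 2 * (b n)\<^sup>2" for \<omega>
    proof -
      have "(1 / real n) *\<^sub>R (\<Sum>i<n. Y i \<omega>) = yhat + (1 / real n) *\<^sub>R S n \<omega>"
        using n by (simp add: S_def sum_subtractf scaleR_diff_right sum_constant_scaleR)
      then have "blinfun_apply (R (alpha (1 / sqrt (real n)))) ((1 / real n) *\<^sub>R (\<Sum>i<n. Y i \<omega>)) - mp_inv K yhat
          = blinfun_apply (T n) ((1 / real n) *\<^sub>R S n \<omega>) + (blinfun_apply (T n) yhat - c)"
        by (simp add: T_def c_def blinfun.add_right)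
      then have "(norm (blinfun_apply (R (alpha (1 / sqrt (real n))))
                ((1 / real n) *\<^sub>R (\<Sum>i<n. Y i \<omega>)) - mp_inv K yhat))\<^sup>2
          \<le> 2 * (norm (blinfun_apply (T n) ((1 / real n) *\<^sub>R S n \<omega>)))\<^sup>2 + 2 * (b n)\<^sup>2"
        using sq_add_le by (simp add: b_def)
      moreover have nb: "norm (blinfun_apply (T n) ((1 / real n) *\<^sub>R S n \<omega>)) \<le> norm (T n) * ((1 / real n) * norm (S n \<omega>))"
        using norm_blinfun[of "T n" "(1 / real n) *\<^sub>R S n \<omega>"] by simp
      moreover have "(norm (blinfun_apply (T n) ((1 / real n) *\<^sub>R S n \<omega>)))\<^sup>2 \<le> (norm (T n) * ((1 / real n) * norm (S n \<omega>)))\<^sup>2"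
        using nb by (intro power_mono) auto
      moreover have "(norm (T n) * ((1 / real n) * norm (S n \<omega>)))\<^sup>2 = (norm (T n))\<^sup>2 * ((1 / real n)\<^sup>2 * (norm (S n \<omega>))\<^sup>2)"
        by (simp add: power_mult_distrib power_divide)
      ultimately show ?thesis unfolding A_def by (simp only: mult.assoc)
    qed
    have intB: "integrable M (\<lambda>\<omega>. A * (norm (S n \<omega>))\<^sup>2 + 2 * (b n)\<^sup>2)"
      using VS(1)[of n] by (intro Bochner_Integration.integrable_add) auto
    have "(\<integral>\<^sup>+\<omega>. ennreal ((norm (blinfun_apply (R (alpha (1 / sqrt (real n))))
                ((1 / real n) *\<^sub>R (\<Sum>i<n. Y i \<omega>)) - mp_inv K yhat))\<^sup>2) \<partial>M)
        \<le> (\<integral>\<^sup>+\<omega>. ennreal (A * (norm (S n \<omega>))\<^sup>2 + 2 * (b n)\<^sup>2) \<partial>M)"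
      by (intro nn_integral_mono ennreal_leI pw)
    also have "\<dots> = ennreal (\<integral>\<omega>. A * (norm (S n \<omega>))\<^sup>2 + 2 * (b n)\<^sup>2 \<partial>M)"
      using intB by (intro nn_integral_eq_integral) (auto simp: A_def)
    also have "(\<integral>\<omega>. A * (norm (S n \<omega>))\<^sup>2 + 2 * (b n)\<^sup>2 \<partial>M) = A * (real n * s) + 2 * (b n)\<^sup>2"
      using VS[of n] by (simp add: Bochner_Integration.integral_add prob_space)
    also have "A * (real n * s) + 2 * (b n)\<^sup>2 = g n"
      using n unfolding A_def g_def by (simp add: power2_eq_square field_simps)
    finally show ?thesis .
  qed
  have L1: "filterlim (\<lambda>n::nat. 1 / sqrt (real n)) (at_right 0) sequentially"
    by (rule inv_sqrt_at_right)
  have L2: "((\<lambda>n. norm (T n) * (1 / sqrt (real n))) \<longlongrightarrow> 0) sequentially"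
    unfolding T_def using filterlim_compose[OF Rlim L1] by simp
  have L3: "filterlim alpha (at_right 0) (at_right 0)"
    unfolding filterlim_at using alim eventually_at_right_less[of "0::real"]
    by (auto elim!: eventually_mono dest: apos)
  have R0: "((\<lambda>a. blinfun_apply (R a) yhat) \<longlongrightarrow> c) (at_right 0)"
    using reg dom unfolding is_regularisation_def c_def by auto
  have L4: "((\<lambda>n. blinfun_apply (T n) yhat) \<longlongrightarrow> c) sequentially"
    unfolding T_def using filterlim_compose[OF filterlim_compose[OF R0 L3] L1] by simp
  have L5: "(b \<longlongrightarrow> 0) sequentially"
    unfolding b_def using tendsto_norm[OF tendsto_diff[OF L4 tendsto_const[of c]]] by simp
  have "((\<lambda>n. 2 * s * (norm (T n) * (1 / sqrt (real n)))\<^sup>2 + 2 * (b n)\<^sup>2) \<longlongrightarrow> 2 * s * 0\<^sup>2 + 2 * 0\<^sup>2) sequentially"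
    by (intro tendsto_intros L2 L5)
  then have Lg: "(g \<longlongrightarrow> 0) sequentially"
    unfolding g_def by simp
  have Lge: "((\<lambda>n. ennreal (g n)) \<longlongrightarrow> 0) sequentially"
    using tendsto_ennrealI[OF Lg] by simp
  show ?thesis
  proof (rule tendsto_sandwich[OF _ _ tendsto_const Lge])
    show "eventually (\<lambda>n. (0::ennreal) \<le> (\<integral>\<^sup>+\<omega>. ennreal ((norm (blinfun_apply (R (alpha (1 / sqrt (real n))))
                ((1 / real n) *\<^sub>R (\<Sum>i<n. Y i \<omega>)) - mp_inv K yhat))\<^sup>2) \<partial>M)) sequentially"
      by simp
    show "eventually (\<lambda>n. (\<integral>\<^sup>+\<omega>. ennreal ((norm (blinfun_apply (R (alpha (1 / sqrt (real n))))
                ((1 / real n) *\<^sub>R (\<Sum>i<n. Y i \<omega>)) - mp_inv K yhat))\<^sup>2) \<partial>M) \<le> ennreal (g n)) sequentially"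
      using eventually_ge_at_top[of 1] by eventually_elim (rule bound)
  qed
qed

end
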